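(* Let $X$ be a continuous random variable with probability density function $f$ (vanishing outside its support) whose support is the interval $(L,R)$, $-\infty\le L<R\le\infty$, and let $p\in\mathcal{D}=\{p\ge1:E[|X|^{p-1}]<\infty\}$ with $p$-mean $\nu_p$. Suppose there exists $c>0$ such that $f(\nu_p-c)=f(\nu_p+c)$, $f(\nu_p-x)>f(\nu_p+x)$ for $x\in(0,c)$, and $f(\nu_p-x)<f(\nu_p+x)$ for $x>c$. Suppose also that $\nu_p-L\le R-\nu_p$. Let $H_p=\int_0^{\nu_p-L} y^{p-1} f(\nu_p-y)\,dy$. Then a random variable with density $\frac{1}{H_p}y^{p-1}f(\nu_p+y)\mathbf{1}_{(0,R-\nu_p)}(y)$ exhibits strict stochastic dominance over a random variable with density $\frac{1}{H_p}y^{p-1}f(\nu_p-y)\mathbf{1}_{(0,\nu_p-L)}(y)$.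
   Context: For $p\ge 1$ and a continuous random variable $X$ with $E[|X|^{p-1}]<\infty$, the $p$-mean $\nu_p$ is the unique real solution $\nu$ of $E[(X-\nu)_+^{p-1}]=E[(\nu-X)_+^{p-1}]$; equivalently $\int_0^{\nu_p-L} y^{p-1} f(\nu_p-y)\,dy=\int_0^{R-\nu_p} y^{p-1} f(\nu_p+y)\,dy$, so both displayed functions are probability densities. A random variable $Y$ with CDF $F_Y$ exhibits strict stochastic dominance over $Z$ with CDF $F_Z$ if $F_Z(x)\ge F_Y(x)$ for all $x$ and $F_Z\not\equiv F_Y$. *)

theory Defs
  imports "HOL-Analysis.Analysis"
begin

definition is_density :: "(real \<Rightarrow> real) \<Rightarrow> bool" where
  "is_density f \<longleftrightarrow> f \<in> borel_measurable lborel \<and> (\<forall>x. 0 \<le> f x)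
     \<and> integrable lborel f \<and> integral\<^sup>L lborel f = 1"

definition support_interval :: "(real \<Rightarrow> real) \<Rightarrow> ereal \<Rightarrow> ereal \<Rightarrow> bool" where
  "support_interval f L R \<longleftrightarrow> L < R
     \<and> (\<forall>x. \<not> (L < ereal x \<and> ereal x < R) \<longrightarrow> f x = 0)
     \<and> (\<forall>a b. L \<le> ereal a \<and> a < b \<and> ereal b \<le> R \<longrightarrow> (LINT x:{a<..<b}|lborel. f x) > 0)"

definition in_D :: "(real \<Rightarrow> real) \<Rightarrow> real \<Rightarrow> bool" where
  "in_D f p \<longleftrightarrow> 1 \<le> p \<and> integrable lborel (\<lambda>x. \<bar>x\<bar> powr (p - 1) * f x)"

text \<open>nu is the p-mean: E[(X-nu)_+^(p-1)] = E[(nu-X)_+^(p-1)].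
  (powr convention 0 powr 0 = 0 makes the case p = 1 the median condition.)\<close>
definition is_pmean :: "(real \<Rightarrow> real) \<Rightarrow> real \<Rightarrow> real \<Rightarrow> bool" where
  "is_pmean f p \<nu> \<longleftrightarrow>
     (LINT x|lborel. (max (x - \<nu>) 0) powr (p - 1) * f x)
   = (LINT x|lborel. (max (\<nu> - x) 0) powr (p - 1) * f x)"

definition cdf_of_density :: "(real \<Rightarrow> real) \<Rightarrow> real \<Rightarrow> real" where
  "cdf_of_density g x = (LINT y:{..x}|lborel. g y)"

definition strict_stoch_dom :: "(real \<Rightarrow> real) \<Rightarrow> (real \<Rightarrow> real) \<Rightarrow> bool" where
  "strict_stoch_dom FY FZ \<longleftrightarrow> (\<forall>x. FZ x \<ge> FY x) \<and> FZ \<noteq> FY"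

end

theory Submission
  imports Defs
begin

lemma powr_tri:
  fixes q x v w :: real assumes q: "q \<ge> 0" and w: "0 \<le> w" "w \<le> \<bar>v - x\<bar>"
  shows "w powr q \<le> 2 powr q * (\<bar>x\<bar> powr q + \<bar>v\<bar> powr q)"
proof -
  have "w powr q \<le> (2 * max \<bar>x\<bar> \<bar>v\<bar>) powr q"
    by (rule powr_mono2) (use q w in auto)
  also have "\<dots> = 2 powr q * max \<bar>x\<bar> \<bar>v\<bar> powr q" by (simp add: powr_mult)
  also have "max \<bar>x\<bar> \<bar>v\<bar> powr q \<le> \<bar>x\<bar> powr q + \<bar>v\<bar> powr q"
    by (cases "\<bar>x\<bar> \<le> \<bar>v\<bar>") (auto simp: max_def)
  finally show ?thesis by (simp add: mult_left_mono)
qed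

lemma integ_max:
  fixes f h :: "real \<Rightarrow> real"
  assumes dens: "is_density f" and pD: "in_D f p"
    and hm: "h \<in> borel_measurable borel" and h: "\<And>x. 0 \<le> h x \<and> h x \<le> \<bar>v - x\<bar>"
  shows "integrable lborel (\<lambda>x. h x powr (p - 1) * f x)"
proof -
  have fm[measurable]: "f \<in> borel_measurable borel" and f0: "\<And>x. 0 \<le> f x" and fi: "integrable lborel f"
    using dens unfolding is_density_def by auto
  have q: "p - 1 \<ge> 0" and gi: "integrable lborel (\<lambda>x. \<bar>x\<bar> powr (p - 1) * f x)" using pD unfolding in_D_def by auto
  note hm[measurable]
  show ?thesis
  proof (rule Bochner_Integration.integrable_bound[where f="\<lambda>x. 2 powr (p-1) * (\<bar>x\<bar> powr (p - 1) * f x + \<bar>v\<bar> powr (p-1) * f x)"])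
    show "integrable lborel (\<lambda>x. 2 powr (p-1) * (\<bar>x\<bar> powr (p - 1) * f x + \<bar>v\<bar> powr (p-1) * f x))"
      using gi fi by auto
    show "(\<lambda>x. h x powr (p - 1) * f x) \<in> borel_measurable lborel" by measurable
    show "AE x in lborel. norm (h x powr (p - 1) * f x) \<le> norm (2 powr (p-1) * (\<bar>x\<bar> powr (p - 1) * f x + \<bar>v\<bar> powr (p-1) * f x))"
    proof (rule AE_I2)
      fix x
      have "h x powr (p - 1) * f x \<le> (2 powr (p-1) * (\<bar>x\<bar> powr (p - 1) + \<bar>v\<bar> powr (p-1))) * f x"
        by (rule mult_right_mono[OF powr_tri[OF q] f0]) (use h in auto)
      then show "norm (h x powr (p - 1) * f x) \<le> norm (2 powr (p-1) * (\<bar>x\<bar> powr (p - 1) * f x + \<bar>v\<bar> powr (p-1) * f x))"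
        using f0[of x] by (simp add: algebra_simps)
    qed
  qed
qed

lemma core:
  fixes a b :: "real \<Rightarrow> real" and c :: real
  assumes ai: "integrable lborel a" and bi: "integrable lborel b"
    and eq: "integral\<^sup>L lborel a = integral\<^sup>L lborel b"
    and le1: "\<And>y. y \<le> c \<Longrightarrow> b y \<le> a y"
    and le2: "\<And>y. y > c \<Longrightarrow> a y \<le> b y"
    and lt: "\<And>y. 0 < y \<Longrightarrow> y < c \<Longrightarrow> b y < a y"
    and c: "c > 0"
  shows "(\<integral>y. indicator {..x} y * b y \<partial>lborel) \<le> (\<integral>y. indicator {..x} y * a y \<partial>lborel)"
    and "(\<integral>y. indicator {..c} y * b y \<partial>lborel) < (\<integral>y. indicator {..c} y * a y \<partial>lborel)"
proof -
  have ia: "integrable lborel (\<lambda>y. indicator A y * a y)" if "A \<in> sets borel" for A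
    using integrable_real_mult_indicator[OF _ ai] that by (simp add: mult.commute)
  have ib: "integrable lborel (\<lambda>y. indicator A y * b y)" if "A \<in> sets borel" for A
    using integrable_real_mult_indicator[OF _ bi] that by (simp add: mult.commute)
  show "(\<integral>y. indicator {..x} y * b y \<partial>lborel) \<le> (\<integral>y. indicator {..x} y * a y \<partial>lborel)"
  proof (cases "x \<le> c")
    case True
    show ?thesis
      by (rule integral_mono[OF ib ia]) (use True le1 in \<open>auto simp: indicator_def\<close>)
  next
    case False
    have split: "integral\<^sup>L lborel g = (\<integral>y. indicator {..x} y * g y \<partial>lborel) + (\<integral>y. indicator {x<..} y * g y \<partial>lborel)"
      if gi: "integrable lborel g" for g :: "real \<Rightarrow> real"
    proof -
      have "(\<integral>y. indicator {..x} y * g y \<partial>lborel) + (\<integral>y. indicator {x<..} y * g y \<partial>lborel)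
         = (\<integral>y. indicator {..x} y * g y + indicator {x<..} y * g y \<partial>lborel)"
        by (rule Bochner_Integration.integral_add[symmetric]) (use integrable_real_mult_indicator[OF _ gi] in \<open>auto simp: mult.commute\<close>)
      also have "\<dots> = integral\<^sup>L lborel g"
        by (rule Bochner_Integration.integral_cong) (auto simp: indicator_def)
      finally show ?thesis by simp
    qed
    have "(\<integral>y. indicator {x<..} y * a y \<partial>lborel) \<le> (\<integral>y. indicator {x<..} y * b y \<partial>lborel)"
      by (rule integral_mono[OF ia ib]) (use False le2 in \<open>auto simp: indicator_def\<close>)
    then show ?thesis using split[OF ai] split[OF bi] eq by linarith
  qed
  show "(\<integral>y. indicator {..c} y * b y \<partial>lborel) < (\<integral>y. indicator {..c} y * a y \<partial>lborel)"
  proof -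
    let ?d = "\<lambda>y. indicator {..c} y * a y - indicator {..c} y * b y"
    have di: "integrable lborel ?d" using ia ib by auto
    have dn: "AE y in lborel. 0 \<le> ?d y" using le1 by (auto simp: indicator_def)
    have dint: "integral\<^sup>L lborel ?d = (\<integral>y. indicator {..c} y * a y \<partial>lborel) - (\<integral>y. indicator {..c} y * b y \<partial>lborel)"
      using ia ib by (intro Bochner_Integration.integral_diff) auto
    have "integral\<^sup>L lborel ?d \<noteq> 0"
    proof
      assume "integral\<^sup>L lborel ?d = 0"
      then have "AE y in lborel. ?d y = 0" using integral_nonneg_eq_0_iff_AE[OF di dn] by simp
      then have "AE y in lborel. y \<notin> {0<..<c}"
        by eventually_elim (use lt in \<open>fastforce simp: indicator_def\<close>)
      then have "emeasure lborel {0<..<c} = 0"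
        by (subst (asm) AE_iff_measurable[of "{0<..<c}"]) auto
      then show False using c by simp
    qed
    moreover have "integral\<^sup>L lborel ?d \<ge> 0" using dn by (intro integral_nonneg_AE) auto
    ultimately show ?thesis using dint by linarith
  qed
qed

theorem lemma2:
  fixes f :: "real \<Rightarrow> real" and L R :: ereal and p \<nu> c :: real
  assumes dens: "is_density f"
    and supp: "support_interval f L R"
    and pD: "in_D f p"
    and nu: "is_pmean f p \<nu>"
    and c_pos: "c > 0"
    and eq_c: "f (\<nu> - c) = f (\<nu> + c)"
    and gt: "\<forall>x. 0 < x \<and> x < c \<longrightarrow> f (\<nu> - x) > f (\<nu> + x)"
    and lt: "\<forall>x. x > c \<longrightarrow> f (\<nu> - x) < f (\<nu> + x)"
    and LR: "ereal \<nu> - L \<le> R - ereal \<nu>"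
  defines "H \<equiv> LINT y:{y. 0 < y \<and> ereal y < ereal \<nu> - L}|lborel. y powr (p - 1) * f (\<nu> - y)"
  shows "strict_stoch_dom
           (cdf_of_density (\<lambda>y. indicator {y. 0 < y \<and> ereal y < R - ereal \<nu>} y
                                   * (y powr (p - 1) * f (\<nu> + y)) / H))
           (cdf_of_density (\<lambda>y. indicator {y. 0 < y \<and> ereal y < ereal \<nu> - L} y
                                   * (y powr (p - 1) * f (\<nu> - y)) / H))"
proof -
  have fm[measurable]: "f \<in> borel_measurable borel" and f0: "\<And>x. 0 \<le> f x"
    using dens unfolding is_density_def by auto
  have fz: "\<And>x. \<not> (L < ereal x \<and> ereal x < R) \<Longrightarrow> f x = 0" and LltR: "L < R"
    using supp unfolding support_interval_def by auto
  have R: "R = \<infinity>"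
  proof (rule ccontr)
    assume "R \<noteq> \<infinity>"
    moreover have "R \<noteq> -\<infinity>" using LltR by auto
    ultimately obtain r where r: "R = ereal r" by (cases R) auto
    define x where "x = max c (r - \<nu>) + 1"
    have "x > c" unfolding x_def by auto
    then have "f (\<nu> + x) > 0" using lt f0[of "\<nu> - x"] by force
    moreover have "\<not> ereal (\<nu> + x) < R" using r unfolding x_def by auto
    ultimately show False using fz[of "\<nu> + x"] by auto
  qed
  have L: "\<not> ereal y < ereal \<nu> - L \<Longrightarrow> f (\<nu> - y) = 0" for y
  proof -
    assume "\<not> ereal y < ereal \<nu> - L"
    then have "\<not> L < ereal (\<nu> - y)" by (cases L) auto
    then show ?thesis using fz by auto
  qed
  define a where "a y = indicator {0<..} y * (y powr (p - 1) * f (\<nu> - y))" for y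
  define b where "b y = indicator {0<..} y * (y powr (p - 1) * f (\<nu> + y))" for y
  define g1 where "g1 x = max (\<nu> - x) 0 powr (p - 1) * f x" for x
  define g2 where "g2 x = max (x - \<nu>) 0 powr (p - 1) * f x" for x
  have a_eq: "a = (\<lambda>y. g1 (\<nu> + (-1) * y))"
    by (auto simp: a_def g1_def fun_eq_iff max_def indicator_def)
  have b_eq: "b = (\<lambda>y. g2 (\<nu> + 1 * y))"
    by (auto simp: b_def g2_def fun_eq_iff max_def indicator_def)
  have g1i: "integrable lborel g1" unfolding g1_def
    by (rule integ_max[OF dens pD, of _ \<nu>]) auto
  have g2i: "integrable lborel g2" unfolding g2_def
    by (rule integ_max[OF dens pD, of _ \<nu>]) auto
  have ai: "integrable lborel a" unfolding a_eq
    by (rule lborel_integrable_real_affine[OF g1i]) simp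
  have bi: "integrable lborel b" unfolding b_eq
    by (rule lborel_integrable_real_affine[OF g2i]) simp
  have "integral\<^sup>L lborel g1 = integral\<^sup>L lborel a"
    unfolding a_eq using lborel_integral_real_affine[of "-1" g1 \<nu>] by simp
  moreover have "integral\<^sup>L lborel g2 = integral\<^sup>L lborel b"
    unfolding b_eq using lborel_integral_real_affine[of "1" g2 \<nu>] by simp
  moreover have "integral\<^sup>L lborel g2 = integral\<^sup>L lborel g1"
    using nu unfolding is_pmean_def g1_def g2_def by simp
  ultimately have eq: "integral\<^sup>L lborel a = integral\<^sup>L lborel b" by simp
  have pa: "(\<lambda>y. indicator {y. 0 < y \<and> ereal y < ereal \<nu> - L} y * (y powr (p - 1) * f (\<nu> - y))) = a"
    by (auto simp: a_def fun_eq_iff indicator_def L)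
  have pb: "(\<lambda>y. indicator {y. 0 < y \<and> ereal y < R - ereal \<nu>} y * (y powr (p - 1) * f (\<nu> + y))) = b"
    by (auto simp: b_def fun_eq_iff indicator_def R)
  have H: "H = integral\<^sup>L lborel a"
    unfolding H_def set_lebesgue_integral_def using pa by (simp add: fun_eq_iff)
  have le1: "\<And>y. y \<le> c \<Longrightarrow> b y \<le> a y"
  proof -
    fix y assume "y \<le> c"
    then consider "y \<le> 0" | "0 < y \<and> y < c" | "y = c" by linarith
    then show "b y \<le> a y"
    proof cases
      case 2
      then show ?thesis using gt by (auto simp: a_def b_def intro!: mult_left_mono less_imp_le)
    qed (use eq_c in \<open>auto simp: a_def b_def\<close>)
  qed
  have le2: "\<And>y. y > c \<Longrightarrow> a y \<le> b y"
    using lt c_pos by (auto simp: a_def b_def intro!: mult_left_mono less_imp_le)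
  have lt3: "\<And>y. 0 < y \<Longrightarrow> y < c \<Longrightarrow> b y < a y"
    using gt by (auto simp: a_def b_def intro!: mult_strict_left_mono)
  note C = core[OF ai bi eq le1 le2 lt3 c_pos]
  have a0: "\<And>y. 0 \<le> a y" by (auto simp: a_def f0 indicator_def)
  have b0: "\<And>y. 0 \<le> b y" by (auto simp: b_def f0 indicator_def)
  have "(\<integral>y. indicator {..c} y * a y \<partial>lborel) \<le> integral\<^sup>L lborel a"
  proof (rule integral_mono[OF _ ai])
    show "integrable lborel (\<lambda>y. indicator {..c} y * a y)"
      using integrable_real_mult_indicator[OF _ ai, of "{..c}"] by (simp add: mult.commute)
  qed (use a0 in \<open>auto simp: indicator_def\<close>)
  moreover have "0 \<le> (\<integral>y. indicator {..c} y * b y \<partial>lborel)"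
    using b0 by (intro integral_nonneg_AE) auto
  ultimately have Hpos: "H > 0" using C(2) H by linarith
  have cdfa: "cdf_of_density (\<lambda>y. indicator {y. 0 < y \<and> ereal y < ereal \<nu> - L} y * (y powr (p - 1) * f (\<nu> - y)) / H) x
      = (\<integral>y. indicator {..x} y * a y \<partial>lborel) / H" for x
    unfolding cdf_of_density_def set_integral_divide_zero using pa
    by (simp add: set_lebesgue_integral_def fun_eq_iff)
  have cdfb: "cdf_of_density (\<lambda>y. indicator {y. 0 < y \<and> ereal y < R - ereal \<nu>} y * (y powr (p - 1) * f (\<nu> + y)) / H) x
      = (\<integral>y. indicator {..x} y * b y \<partial>lborel) / H" for x
    unfolding cdf_of_density_def set_integral_divide_zero using pb
    by (simp add: set_lebesgue_integral_def fun_eq_iff)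
  show ?thesis
    unfolding strict_stoch_dom_def
  proof (intro conjI allI)
    fix x show "cdf_of_density (\<lambda>y. indicator {y. 0 < y \<and> ereal y < R - ereal \<nu>} y * (y powr (p - 1) * f (\<nu> + y)) / H) x
      \<le> cdf_of_density (\<lambda>y. indicator {y. 0 < y \<and> ereal y < ereal \<nu> - L} y * (y powr (p - 1) * f (\<nu> - y)) / H) x"
      unfolding cdfa cdfb using C(1)[of x] Hpos by (simp add: divide_right_mono)
  next
    show "cdf_of_density (\<lambda>y. indicator {y. 0 < y \<and> ereal y < ereal \<nu> - L} y * (y powr (p - 1) * f (\<nu> - y)) / H) \<noteq>
      cdf_of_density (\<lambda>y. indicator {y. 0 < y \<and> ereal y < R - ereal \<nu>} y * (y powr (p - 1) * f (\<nu> + y)) / H)"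
    proof
      assume "cdf_of_density (\<lambda>y. indicator {y. 0 < y \<and> ereal y < ereal \<nu> - L} y * (y powr (p - 1) * f (\<nu> - y)) / H) =
      cdf_of_density (\<lambda>y. indicator {y. 0 < y \<and> ereal y < R - ereal \<nu>} y * (y powr (p - 1) * f (\<nu> + y)) / H)"
      from fun_cong[OF this, of c] show False
        unfolding cdfa cdfb using C(2) Hpos by (simp add: divide_right_mono)
    qed
  qed
qed

end
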